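(* In the setting described in the context, suppose Assumptions (A1)–(A3) hold and $\eta_t\le\min\{\frac1\mu,\frac1{L\gamma},\frac{\mu}{\gamma^2}\}$. Then $$\mathbb{E}\|\overline{\mathbf w}^{t+1}-\mathbf w^\star\|_2^2\le(1+K\eta_t^2)(1-\mu\eta_t)^L\,\mathbb{E}\|\mathbf w^t-\mathbf w^\star\|_2^2+\Big(\frac1K+\eta_t^2\Big)\big(L^2\zeta+KL^3\gamma^2\zeta\eta_t^2e\big),$$ where $e$ is Euler's number.
   Context: Setting (privacy-preserving quantized FL). There are $M$ groups $\mathcal G_1,\dots,\mathcal G_M$ of devices, $|\mathcal G_m|=g_m$, $K=\sum_m g_m$; device $d_{m,u}\in\mathcal G_m$ uses $b_m\ge1$ quantization bits, privacy parameter $\epsilon_{1,m,u}\ge0$, and has a local loss $f_{m,u}:\mathbb R^d\to\mathbb R$. The global loss is $f=\frac1K\sum_m\sum_{u}f_{m,u}$ with minimizer $\mathbf w^\star$. Given integers $1\le c_m\le g_m$, $N=\sum_m c_m$, a number of local steps $L\ge1$, learning rates $\eta_t>0$ and clipping constant $C>0$, round $t$ proceeds from the global model $\mathbf w^t$ as follows. For each $m$, a cluster $\mathcal C_m\subseteq\mathcal G_m$ is drawn uniformly at random among subsets of size $c_m$ (so $\Pr[d_{m,u}\in\mathcal C_m]=c_m/g_m$). For every device (for the analysis, also non-participating ones) set $\mathbf w^{0,m,u,t}=\mathbf w^t$ and $\mathbf w^{l+1,m,u,t}=\mathbf w^{l,m,u,t}-\eta_t\widetilde\nabla f_{m,u}(\mathbf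 w^{l,m,u,t})$, $l=0,\dots,L-1$, where $\widetilde\nabla f_{m,u}$ is a stochastic (mini-batch) gradient. Let $\mathbf v^{m,u,t}=\mathbf w^{L,m,u,t}-\mathbf w^t$, $\widehat{\mathbf v}^{m,u,t}=\min\{1,C/\|\mathbf v^{m,u,t}\|_1\}\mathbf v^{m,u,t}$, and $\widehat{\mathbf w}^{m,u,t}=\mathcal Q_{b_m,\epsilon_{1,m,u}}(\widehat{\mathbf v}^{m,u,t})$, where $\mathcal Q_{b,\epsilon_1}$ is applied coordinatewise with $2^b$ uniformly spaced levels $q_j=-C+(j-1)\frac{2C}{2^b-1}$ on $[-C,C]$ and maps a scalar $a\in[q_i,q_{i+1}]$ to $q_i$ with probability $p^\star$ and to $q_{i+1}$ with probability $1-p^\star$, where $p^\star=\frac{e^{\epsilon_1}}{e^{\epsilon_1}+1}$ if $|q_i-a|\le|q_{i+1}-a|$ and $p^\star=\frac1{e^{\epsilon_1}+1}$ otherwise (independently across coordinates). The fusion center receives $\widehat{\mathbf w}^{m,u,t}+\mathbf n^{m,u,t}$ with $\mathbf n^{m,u,t}\sim\mathcal N(\mathbf 0,\sigma_{m,u}^2\mathbf I)$ independent of everything else, and sets $\mathbf w^{t+1}=\mathbf w^t+\sum_m\sum_{d_{m,u}\in\mathcal C_m}\omega_{m,u}(\widehat{\mathbf w}^{m,u,t}+\mathbf n^{m,u,t})$, where the fusion weights satisfy $\omega_{m,u}\ge0$ and $\sum_m\sum_{d_{m,u}\in\mathcal C_m}\omega_{m,u}=1$. Define $\check{\mathbf w}^{t+1}=\mathbf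 w^t+\sum_m\sum_{d_{m,u}\in\mathcal C_m}\omega_{m,u}\widehat{\mathbf w}^{m,u,t}$ and $\overline{\mathbf w}^{t+1}=\sum_m\sum_{d_{m,u}\in\mathcal C_m}\omega_{m,u}\mathbf w^{L,m,u,t}$. All expectations are over all randomness. Assumptions. (A1) Each $f_{m,u}$ is convex, differentiable and $\gamma$-smooth: $\|\nabla f_{m,u}(\mathbf x)-\nabla f_{m,u}(\mathbf y)\|_2\le\gamma\|\mathbf x-\mathbf y\|_2$ for all $\mathbf x,\mathbf y$. (A2) Each $f_{m,u}$ is $\mu$-strongly convex: $\langle\nabla f_{m,u}(\mathbf x)-\nabla f_{m,u}(\mathbf y),\mathbf x-\mathbf y\rangle\ge\mu\|\mathbf x-\mathbf y\|_2^2$, $\mu>0$. (A3) For every device and every point $\mathbf x$ at which it is evaluated, the stochastic gradient (computed with fresh, independent randomness) satisfies $\mathbb E[\widetilde\nabla f_{m,u}(\mathbf x)]=\nabla f(\mathbf x)$ and $\mathbb E\|\widetilde\nabla f_{m,u}(\mathbf x)-\nabla f(\mathbf x)\|_2^2\le\zeta$. *)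

theory Defs
  imports "HOL-Probability.Probability"
begin

fun local_sgd :: "('a::real_vector \<Rightarrow> 's \<Rightarrow> 'a) \<Rightarrow> real \<Rightarrow> 'a \<Rightarrow> (nat \<Rightarrow> 's) \<Rightarrow> nat \<Rightarrow> 'a" where
  "local_sgd G eta x ss 0 = x"
| "local_sgd G eta x ss (Suc l) =
     local_sgd G eta x ss l - eta *\<^sub>R G (local_sgd G eta x ss l) (ss l)"

definition cluster_choices :: "nat \<Rightarrow> (nat \<Rightarrow> nat) \<Rightarrow> (nat \<Rightarrow> nat) \<Rightarrow> (nat \<Rightarrow> nat set) set" where
  "cluster_choices M g c =
     {Cs. (\<forall>m<M. Cs m \<subseteq> {..<g m} \<and> card (Cs m) = c m) \<and> (\<forall>m\<ge>M. Cs m = {})}"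

text \<open>Index set of all (group, device, local step) triples.\<close>
definition sample_index :: "nat \<Rightarrow> (nat \<Rightarrow> nat) \<Rightarrow> nat \<Rightarrow> (nat \<times> nat \<times> nat) set" where
  "sample_index M g L = {(m, u, l). m < M \<and> u < g m \<and> l < L}"

end

theory Submission
  imports Defs
begin


lemma contraction:
  fixes gF :: "'a::euclidean_space \<Rightarrow> 'a"
  assumes sc: "gF x \<bullet> (x - w) \<ge> \<mu> * (norm (x - w))\<^sup>2"
    and lip: "norm (gF x) \<le> \<gamma> * norm (x - w)"
    and eta: "\<eta> > 0" "\<eta> * \<gamma>\<^sup>2 \<le> \<mu>"
  shows "(norm (x - \<eta> *\<^sub>R gF x - w))\<^sup>2 \<le> (1 - \<mu> * \<eta>) * (norm (x - w))\<^sup>2"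
proof -
  define d where "d = x - w"
  have e: "x - \<eta> *\<^sub>R gF x - w = d - \<eta> *\<^sub>R gF x" by (simp add: d_def algebra_simps)
  have n2: "(norm (gF x))\<^sup>2 \<le> \<gamma>\<^sup>2 * (norm d)\<^sup>2"
  proof -
    have "0 \<le> norm (gF x)" by simp
    hence "(norm (gF x))\<^sup>2 \<le> (\<gamma> * norm d)\<^sup>2" using lip d_def by (intro power_mono) auto
    thus ?thesis by (simp add: power_mult_distrib)
  qed
  hence "\<eta>\<^sup>2 * (norm (gF x))\<^sup>2 \<le> \<eta>\<^sup>2 * (\<gamma>\<^sup>2 * (norm d)\<^sup>2)" by (intro mult_left_mono) auto
  also have "\<eta>\<^sup>2 * (\<gamma>\<^sup>2 * (norm d)\<^sup>2) = \<eta> * (\<eta> * \<gamma>\<^sup>2) * (norm d)\<^sup>2" by (simp add: power2_eq_square)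
  also have "\<dots> \<le> \<eta> * \<mu> * (norm d)\<^sup>2" using eta by (intro mult_right_mono mult_left_mono) auto
  finally have a: "\<eta>\<^sup>2 * (norm (gF x))\<^sup>2 \<le> \<eta> * \<mu> * (norm d)\<^sup>2" .
  have b: "2 * \<eta> * (gF x \<bullet> d) \<ge> 2 * \<eta> * (\<mu> * (norm d)\<^sup>2)" using sc eta d_def by (intro mult_left_mono) auto
  have c: "(norm (d - \<eta> *\<^sub>R gF x))\<^sup>2 = (norm d)\<^sup>2 - 2 * \<eta> * (gF x \<bullet> d) + \<eta>\<^sup>2 * (norm (gF x))\<^sup>2"
    by (simp only: power2_norm_eq_inner) (simp add: inner_diff_left inner_diff_right inner_commute power2_eq_square algebra_simps)
  show ?thesis unfolding e c d_def[symmetric] using a b by (simp add: algebra_simps)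
qed



lemma sgd_step:
  fixes G :: "'a::euclidean_space \<Rightarrow> 's \<Rightarrow> 'a"
  assumes D: "prob_space D"
    and int: "integrable D (G x)" and mean: "(\<integral>s. G x s \<partial>D) = gx"
    and var: "(\<integral>\<^sup>+ s. ennreal ((norm (G x s - gx))\<^sup>2) \<partial>D) \<le> ennreal \<zeta>"
    and q: "(norm (x - \<eta> *\<^sub>R gx - w))\<^sup>2 \<le> q"
  shows "(\<integral>\<^sup>+ s. ennreal ((norm (x - \<eta> *\<^sub>R G x s - w))\<^sup>2) \<partial>D) \<le> ennreal (q + \<eta>\<^sup>2 * max \<zeta> 0)"
proof -
  interpret prob_space D by (rule D)
  define a where "a = x - \<eta> *\<^sub>R gx - w"
  define e where "e = (\<lambda>s. G x s - gx)"
  have me[measurable]: "e \<in> borel_measurable D" unfolding e_def using int by measurable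
  have ie: "integrable D e" unfolding e_def using int by auto
  have mean0: "(\<integral>s. e s \<partial>D) = 0" unfolding e_def using int mean by (simp add: prob_space)
  have fin: "(\<integral>\<^sup>+ s. ennreal ((norm (e s))\<^sup>2) \<partial>D) < \<infinity>"
    using var unfolding e_def by (simp add: le_less_trans)
  have ie2: "integrable D (\<lambda>s. (norm (e s))\<^sup>2)"
    by (rule integrableI_nonneg) (use fin in auto)
  have ie2b: "(\<integral>s. (norm (e s))\<^sup>2 \<partial>D) \<le> max \<zeta> 0"
  proof -
    have "ennreal (\<integral>s. (norm (e s))\<^sup>2 \<partial>D) = (\<integral>\<^sup>+ s. ennreal ((norm (e s))\<^sup>2) \<partial>D)"
      by (rule nn_integral_eq_integral[symmetric]) (use ie2 in auto)
    also have "\<dots> \<le> ennreal \<zeta>" using var unfolding e_def .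
    finally have le: "ennreal (\<integral>s. (norm (e s))\<^sup>2 \<partial>D) \<le> ennreal \<zeta>" .
    have nn: "0 \<le> (\<integral>s. (norm (e s))\<^sup>2 \<partial>D)" by simp
    show ?thesis
    proof (cases "\<zeta> \<ge> 0")
      case True thus ?thesis using le nn by (simp add: ennreal_le_iff)
    next
      case False thus ?thesis using le nn by (simp add: ennreal_neg)
    qed
  qed
  have pt: "(norm (x - \<eta> *\<^sub>R G x s - w))\<^sup>2 = (norm a)\<^sup>2 - 2 * \<eta> * (a \<bullet> e s) + \<eta>\<^sup>2 * (norm (e s))\<^sup>2" for s
  proof -
    have "x - \<eta> *\<^sub>R G x s - w = a - \<eta> *\<^sub>R e s" by (simp add: a_def e_def algebra_simps)
    thus ?thesis
      by (simp only: power2_norm_eq_inner) (simp add: inner_diff_left inner_diff_right inner_commute power2_eq_square algebra_simps)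
  qed
  have iall: "integrable D (\<lambda>s. (norm a)\<^sup>2 - 2 * \<eta> * (a \<bullet> e s) + \<eta>\<^sup>2 * (norm (e s))\<^sup>2)"
    using ie ie2 by auto
  have "(\<integral>\<^sup>+ s. ennreal ((norm (x - \<eta> *\<^sub>R G x s - w))\<^sup>2) \<partial>D)
      = (\<integral>\<^sup>+ s. ennreal ((norm a)\<^sup>2 - 2 * \<eta> * (a \<bullet> e s) + \<eta>\<^sup>2 * (norm (e s))\<^sup>2) \<partial>D)"
    by (simp add: pt)
  also have "\<dots> = ennreal (\<integral>s. (norm a)\<^sup>2 - 2 * \<eta> * (a \<bullet> e s) + \<eta>\<^sup>2 * (norm (e s))\<^sup>2 \<partial>D)"
    by (rule nn_integral_eq_integral) (use iall in \<open>auto simp: pt[symmetric]\<close>)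
  also have "(\<integral>s. (norm a)\<^sup>2 - 2 * \<eta> * (a \<bullet> e s) + \<eta>\<^sup>2 * (norm (e s))\<^sup>2 \<partial>D)
      = (norm a)\<^sup>2 - 2 * \<eta> * (a \<bullet> (\<integral>s. e s \<partial>D)) + \<eta>\<^sup>2 * (\<integral>s. (norm (e s))\<^sup>2 \<partial>D)"
    using ie ie2 by (simp add: prob_space)
  also have "\<dots> \<le> q + \<eta>\<^sup>2 * max \<zeta> 0"
    using mean0 ie2b q unfolding a_def by (simp add: mult_left_mono add_mono)
  finally show ?thesis by (simp add: ennreal_leI)
qed



lemma local_sgd_cong:
  "(\<And>l. l < n \<Longrightarrow> ss l = ss' l) \<Longrightarrow> local_sgd G eta x ss n = local_sgd G eta x ss' n"
  by (induction n) auto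

lemma local_sgd_meas:
  fixes Gf :: "'a::euclidean_space \<Rightarrow> 's \<Rightarrow> 'a"
  assumes GM: "(\<lambda>(x, s). Gf x s) \<in> borel_measurable (borel \<Otimes>\<^sub>M Dm)"
    and wz: "wz \<in> borel_measurable N"
    and ss: "\<And>l. l < n \<Longrightarrow> (\<lambda>z. ss z l) \<in> measurable N Dm"
  shows "(\<lambda>z. local_sgd Gf eta (wz z) (ss z) n) \<in> borel_measurable N"
  using ss
proof (induction n)
  case 0
  then show ?case using wz by simp
next
  case (Suc n)
  have wn: "(\<lambda>z. local_sgd Gf eta (wz z) (ss z) n) \<in> borel_measurable N"
    using Suc by auto
  have p: "(\<lambda>z. (local_sgd Gf eta (wz z) (ss z) n, ss z n)) \<in> measurable N (borel \<Otimes>\<^sub>M Dm)"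
    using wn Suc.prems[of n] by (intro measurable_Pair) auto
  have "(\<lambda>z. (\<lambda>(x, s). Gf x s) (local_sgd Gf eta (wz z) (ss z) n, ss z n)) \<in> borel_measurable N"
    by (rule measurable_comp[OF p GM, unfolded comp_def])
  hence "(\<lambda>z. Gf (local_sgd Gf eta (wz z) (ss z) n) (ss z n)) \<in> borel_measurable N" by simp
  then show ?case using wn by simp
qed

lemma iterate:
  fixes Gf :: "'a::euclidean_space \<Rightarrow> 's \<Rightarrow> 'a" and Df :: "'i \<Rightarrow> 's measure"
    and j :: "nat \<Rightarrow> 'i"
  assumes GM: "(\<lambda>(x, s). Gf x s) \<in> borel_measurable (borel \<Otimes>\<^sub>M Dm)"
    and fin: "finite I" and jI: "\<And>l. l < L \<Longrightarrow> j l \<in> I" and jinj: "inj j"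
    and Dj: "\<And>l. l < L \<Longrightarrow> Df (j l) = Dm"
    and Dp: "\<And>i. i \<in> I \<Longrightarrow> prob_space (Df i)"
    and step: "\<And>x. (\<integral>\<^sup>+ s. ennreal ((norm (x - eta *\<^sub>R Gf x s - w))\<^sup>2) \<partial>Dm)
                 \<le> ennreal (\<rho> * (norm (x - w))\<^sup>2 + c)"
    and rho: "0 \<le> \<rho>" "\<rho> \<le> 1" and c: "0 \<le> c"
  shows "n \<le> L \<Longrightarrow> (\<integral>\<^sup>+ S. ennreal ((norm (local_sgd Gf eta x0 (\<lambda>l. S (j l)) n - w))\<^sup>2) \<partial>PiM I Df)
           \<le> ennreal (\<rho> ^ n * (norm (x0 - w))\<^sup>2 + real n * c)"
proof (induction n)
  case 0
  have "prob_space (PiM I Df)" by (rule prob_space_PiM) (use Dp in auto)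
  then show ?case by (simp add: prob_space.emeasure_space_1)
next
  case (Suc n)
  define Df' where "Df' = (\<lambda>i. if i \<in> I then Df i else return (count_space UNIV) undefined)"
  have pr: "prob_space (Df' i)" for i
    unfolding Df'_def using Dp by (auto intro: prob_space_return)
  interpret product_sigma_finite Df'
    unfolding product_sigma_finite_def using pr by (auto intro: prob_space_imp_sigma_finite)
  have PI: "PiM J Df = PiM J Df'" if "J \<subseteq> I" for J
    using that by (intro PiM_cong) (auto simp: Df'_def)
  define k where "k = j n"
  have nL: "n < L" using Suc by auto
  have kI: "k \<in> I" using jI nL k_def by auto
  have Iins: "I = insert k (I - {k})" using kI by auto
  define wn where "wn = (\<lambda>S. local_sgd Gf eta x0 (\<lambda>l. S (j l)) n)"
  have Dk: "Df' k = Dm" using kI Dj nL k_def by (simp add: Df'_def)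
  have compm: "(\<lambda>S. S (j l)) \<in> measurable (PiM J Df') Dm" if "l < L" "j l \<in> J" "J \<subseteq> I" for l J
  proof -
    have "(\<lambda>S. S (j l)) \<in> measurable (PiM J Df') (Df' (j l))"
      using that by (intro measurable_component_singleton)
    moreover have "Df' (j l) = Dm" using that jI Dj by (simp add: Df'_def)
    ultimately show ?thesis by simp
  qed
  have wnm: "wn \<in> borel_measurable (PiM J Df')" if "\<And>l. l < n \<Longrightarrow> j l \<in> J" "J \<subseteq> I" for J
    unfolding wn_def
    by (rule local_sgd_meas[OF GM, where wz="\<lambda>_. x0", simplified])
       (use that nL in \<open>auto intro!: compm\<close>)
  have gm: "(\<lambda>S. ennreal ((norm (wn S - w))\<^sup>2)) \<in> borel_measurable (PiM J Df')"
    if "\<And>l. l < n \<Longrightarrow> j l \<in> J" "J \<subseteq> I" for J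
    using wnm[OF that] by measurable
  have wnupd: "wn (S(k := y)) = wn S" for S y
    unfolding wn_def k_def
    by (rule local_sgd_cong) (use jinj in \<open>auto dest: injD\<close>)
  have w1: "local_sgd Gf eta x0 (\<lambda>l. S (j l)) (Suc n) = wn S - eta *\<^sub>R Gf (wn S) (S k)" for S
    by (simp add: wn_def k_def)
  have fm: "(\<lambda>S. ennreal ((norm (local_sgd Gf eta x0 (\<lambda>l. S (j l)) (Suc n) - w))\<^sup>2)) \<in> borel_measurable (PiM I Df')"
  proof -
    have "(\<lambda>S. local_sgd Gf eta x0 (\<lambda>l. S (j l)) (Suc n)) \<in> borel_measurable (PiM I Df')"
      by (rule local_sgd_meas[OF GM, where wz="\<lambda>_. x0", simplified])
         (use nL jI in \<open>auto intro!: compm\<close>)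
    thus ?thesis by measurable
  qed
  have jn: "\<And>l. l < n \<Longrightarrow> j l \<in> I - {k}"
    using jI nL jinj k_def by (auto dest: injD)
  have "(\<integral>\<^sup>+ S. ennreal ((norm (local_sgd Gf eta x0 (\<lambda>l. S (j l)) (Suc n) - w))\<^sup>2) \<partial>PiM I Df)
     = (\<integral>\<^sup>+ S. ennreal ((norm (local_sgd Gf eta x0 (\<lambda>l. S (j l)) (Suc n) - w))\<^sup>2) \<partial>PiM (insert k (I - {k})) Df')"
    using PI[of I] Iins by simp
  also have "\<dots> = (\<integral>\<^sup>+ S. ennreal ((norm (wn S - eta *\<^sub>R Gf (wn S) (S k) - w))\<^sup>2) \<partial>PiM (insert k (I - {k})) Df')"
    by (simp only: w1)
  also have "\<dots> = (\<integral>\<^sup>+ S. \<integral>\<^sup>+ y. ennreal ((norm (wn (S(k:=y)) - eta *\<^sub>R Gf (wn (S(k:=y))) ((S(k:=y)) k) - w))\<^sup>2) \<partial>Df' k \<partial>PiM (I - {k}) Df')"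
  proof (rule product_nn_integral_insert)
    show "finite (I - {k})" using fin by simp
    show "k \<notin> I - {k}" by simp
    have "(\<lambda>S. ennreal ((norm (wn S - eta *\<^sub>R Gf (wn S) (S k) - w))\<^sup>2)) \<in> borel_measurable (PiM I Df')"
      using fm by (simp only: w1)
    thus "(\<lambda>S. ennreal ((norm (wn S - eta *\<^sub>R Gf (wn S) (S k) - w))\<^sup>2)) \<in> borel_measurable (PiM (insert k (I - {k})) Df')"
      by (simp only: Iins[symmetric])
  qed
  also have "\<dots> = (\<integral>\<^sup>+ S. \<integral>\<^sup>+ y. ennreal ((norm (wn S - eta *\<^sub>R Gf (wn S) y - w))\<^sup>2) \<partial>Df' k \<partial>PiM (I - {k}) Df')"
    by (simp only: wnupd fun_upd_same)
  also have "\<dots> \<le> (\<integral>\<^sup>+ S. ennreal \<rho> * ennreal ((norm (wn S - w))\<^sup>2) + ennreal c \<partial>PiM (I - {k}) Df')"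
    by (rule nn_integral_mono) (use step rho c in \<open>auto simp: Dk ennreal_mult ennreal_plus[symmetric]\<close>)
  also have "\<dots> = ennreal \<rho> * (\<integral>\<^sup>+ S. ennreal ((norm (wn S - w))\<^sup>2) \<partial>PiM (I - {k}) Df') + ennreal c"
  proof -
    have ps: "prob_space (PiM (I - {k}) Df')" by (rule prob_space_PiM) (use pr in auto)
    show ?thesis
      using gm[of "I - {k}"] jn
      by (simp add: nn_integral_add nn_integral_cmult prob_space.emeasure_space_1[OF ps])
  qed
  also have "(\<integral>\<^sup>+ S. ennreal ((norm (wn S - w))\<^sup>2) \<partial>PiM (I - {k}) Df')
       = (\<integral>\<^sup>+ S. ennreal ((norm (wn S - w))\<^sup>2) \<partial>PiM I Df)"
  proof -
    have "(\<integral>\<^sup>+ S. ennreal ((norm (wn S - w))\<^sup>2) \<partial>PiM I Df)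
        = (\<integral>\<^sup>+ S. ennreal ((norm (wn S - w))\<^sup>2) \<partial>PiM (insert k (I - {k})) Df')"
      using PI[of I] Iins by simp
    also have "\<dots> = (\<integral>\<^sup>+ S. \<integral>\<^sup>+ y. ennreal ((norm (wn (S(k:=y)) - w))\<^sup>2) \<partial>Df' k \<partial>PiM (I - {k}) Df')"
    proof (rule product_nn_integral_insert)
      show "finite (I - {k})" using fin by simp
      show "k \<notin> I - {k}" by simp
      have "(\<lambda>S. ennreal ((norm (wn S - w))\<^sup>2)) \<in> borel_measurable (PiM I Df')"
        using gm[of I] jn by auto
      thus "(\<lambda>S. ennreal ((norm (wn S - w))\<^sup>2)) \<in> borel_measurable (PiM (insert k (I - {k})) Df')"
        by (simp only: Iins[symmetric])
    qed
    also have "\<dots> = (\<integral>\<^sup>+ S. \<integral>\<^sup>+ y. ennreal ((norm (wn S - w))\<^sup>2) \<partial>Df' k \<partial>PiM (I - {k}) Df')"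
      by (simp only: wnupd)
    also have "\<dots> = (\<integral>\<^sup>+ S. ennreal ((norm (wn S - w))\<^sup>2) \<partial>PiM (I - {k}) Df')"
      by (simp add: prob_space.emeasure_space_1[OF pr])
    finally show ?thesis by simp
  qed
  also have "ennreal \<rho> * (\<integral>\<^sup>+ S. ennreal ((norm (wn S - w))\<^sup>2) \<partial>PiM I Df) + ennreal c
      \<le> ennreal \<rho> * ennreal (\<rho> ^ n * (norm (x0 - w))\<^sup>2 + real n * c) + ennreal c"
    using Suc nL unfolding wn_def by (intro add_mono mult_left_mono) auto
  also have "\<dots> = ennreal (\<rho> * (\<rho> ^ n * (norm (x0 - w))\<^sup>2 + real n * c) + c)"
    using rho c by (simp add: ennreal_mult ennreal_plus)
  also have "\<dots> \<le> ennreal (\<rho> ^ Suc n * (norm (x0 - w))\<^sup>2 + real (Suc n) * c)"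
  proof (rule ennreal_leI)
    have "\<rho> * (real n * c) \<le> real n * c" using rho c by (simp add: mult_left_le_one_le)
    thus "\<rho> * (\<rho> ^ n * (norm (x0 - w))\<^sup>2 + real n * c) + c \<le> \<rho> ^ Suc n * (norm (x0 - w))\<^sup>2 + real (Suc n) * c"
      by (simp add: algebra_simps)
  qed
  finally show ?case .
qed


lemma jensen_norm2:
  fixes v :: "'i \<Rightarrow> 'a::real_normed_vector"
  assumes "finite T" "T \<noteq> {}" "(\<Sum>i\<in>T. a i) = 1" "\<And>i. i \<in> T \<Longrightarrow> a i \<ge> 0"
  shows "(norm (\<Sum>i\<in>T. a i *\<^sub>R v i))\<^sup>2 \<le> (\<Sum>i\<in>T. a i * (norm (v i))\<^sup>2)"
proof -
  have "norm (\<Sum>i\<in>T. a i *\<^sub>R v i) \<le> (\<Sum>i\<in>T. norm (a i *\<^sub>R v i))" by (rule norm_sum)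
  also have "\<dots> = (\<Sum>i\<in>T. a i * norm (v i))" using assms(4) by (intro sum.cong) auto
  finally have "(norm (\<Sum>i\<in>T. a i *\<^sub>R v i))\<^sup>2 \<le> (\<Sum>i\<in>T. a i * norm (v i))\<^sup>2"
    by (intro power_mono) auto
  also have "\<dots> \<le> (\<Sum>i\<in>T. a i * (norm (v i))\<^sup>2)"
    using convex_on_sum[OF assms(1,2) convex_power2 assms(3), of "\<lambda>i. norm (v i)"] assms(4)
    by simp
  finally show ?thesis .
qed

lemma jensen2:
  fixes v :: "'i \<Rightarrow> 'j \<Rightarrow> 'a::real_normed_vector"
  assumes fin: "finite A" "\<And>m. m \<in> A \<Longrightarrow> finite (B m)"
    and s1: "(\<Sum>m\<in>A. \<Sum>u\<in>B m. a m u) = 1"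
    and nn: "\<And>m u. m \<in> A \<Longrightarrow> u \<in> B m \<Longrightarrow> a m u \<ge> 0"
  shows "(norm ((\<Sum>m\<in>A. \<Sum>u\<in>B m. a m u *\<^sub>R v m u) - w))\<^sup>2
           \<le> (\<Sum>m\<in>A. \<Sum>u\<in>B m. a m u * (norm (v m u - w))\<^sup>2)"
proof -
  define T where "T = Sigma A B"
  have finT: "finite T" unfolding T_def using fin by auto
  have sT: "(\<Sum>(m, u)\<in>T. a m u) = 1"
    using s1 fin unfolding T_def by (simp add: sum.Sigma)
  have Tne: "T \<noteq> {}" using sT by auto
  have e1: "(\<Sum>m\<in>A. \<Sum>u\<in>B m. a m u *\<^sub>R v m u) - w = (\<Sum>(m, u)\<in>T. a m u *\<^sub>R (v m u - w))"
  proof -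
    have "(\<Sum>(m, u)\<in>T. a m u *\<^sub>R (v m u - w)) = (\<Sum>(m, u)\<in>T. a m u *\<^sub>R v m u) - (\<Sum>(m, u)\<in>T. a m u) *\<^sub>R w"
      by (simp add: scaleR_diff_right sum_subtractf scaleR_sum_left case_prod_beta)
    also have "\<dots> = (\<Sum>(m, u)\<in>T. a m u *\<^sub>R v m u) - w" using sT by simp
    also have "(\<Sum>(m, u)\<in>T. a m u *\<^sub>R v m u) = (\<Sum>m\<in>A. \<Sum>u\<in>B m. a m u *\<^sub>R v m u)"
      using fin unfolding T_def by (simp add: sum.Sigma)
    finally show ?thesis by simp
  qed
  have e2: "(\<Sum>m\<in>A. \<Sum>u\<in>B m. a m u * (norm (v m u - w))\<^sup>2) = (\<Sum>(m, u)\<in>T. a m u * (norm (v m u - w))\<^sup>2)"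
    using fin unfolding T_def by (simp add: sum.Sigma)
  have "(norm (\<Sum>i\<in>T. (case_prod a) i *\<^sub>R (\<lambda>(m, u). v m u - w) i))\<^sup>2 \<le> (\<Sum>i\<in>T. (case_prod a) i * (norm ((\<lambda>(m, u). v m u - w) i))\<^sup>2)"
    by (rule jensen_norm2[OF finT Tne]) (use sT nn in \<open>auto simp: T_def case_prod_beta\<close>)
  thus ?thesis unfolding e1 e2 by (simp add: case_prod_beta)
qed
theorem lemma7:
  fixes M L :: nat and g c :: "nat \<Rightarrow> nat"
    and f :: "nat \<Rightarrow> nat \<Rightarrow> 'a::euclidean_space \<Rightarrow> real"
    and gf :: "nat \<Rightarrow> nat \<Rightarrow> 'a \<Rightarrow> 'a"
    and F :: "'a \<Rightarrow> real" and gF :: "'a \<Rightarrow> 'a" and wstar :: 'a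
    and G :: "nat \<Rightarrow> nat \<Rightarrow> 'a \<Rightarrow> 's \<Rightarrow> 'a" and D :: "nat \<Rightarrow> nat \<Rightarrow> 's measure"
    and P :: "'b measure" and wt :: "'b \<Rightarrow> 'a"
    and \<omega> :: "(nat \<Rightarrow> nat set) \<Rightarrow> nat \<Rightarrow> nat \<Rightarrow> real"
    and \<mu> \<gamma> \<zeta> \<eta> :: real
  assumes M_pos: "M \<ge> 1" and L_pos: "L \<ge> 1"
    and c_bounds: "\<forall>m<M. 1 \<le> c m \<and> c m \<le> g m"
    \<comment> \<open>global loss and its gradient\<close>
    and F_def: "F = (\<lambda>x. (1 / real (\<Sum>m<M. g m)) * (\<Sum>m<M. \<Sum>u<g m. f m u x))"
    and gF_grad: "\<forall>x. (F has_derivative (\<lambda>h. gF x \<bullet> h)) (at x)"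
    and wstar_min: "\<forall>x. F wstar \<le> F x"
    \<comment> \<open>(A1): convex, differentiable (with gradient gf), gamma-smooth\<close>
    and A1_convex: "\<forall>m<M. \<forall>u<g m. convex_on UNIV (f m u)"
    and A1_grad: "\<forall>m<M. \<forall>u<g m. \<forall>x. (f m u has_derivative (\<lambda>h. gf m u x \<bullet> h)) (at x)"
    and A1_smooth: "\<forall>m<M. \<forall>u<g m. \<forall>x y. norm (gf m u x - gf m u y) \<le> \<gamma> * norm (x - y)"
    \<comment> \<open>(A2): mu-strongly convex\<close>
    and mu_pos: "\<mu> > 0"
    and A2: "\<forall>m<M. \<forall>u<g m. \<forall>x y. (gf m u x - gf m u y) \<bullet> (x - y) \<ge> \<mu> * (norm (x - y))\<^sup>2"
    \<comment> \<open>(A3): stochastic gradient G m u x s with a fresh sample s drawn from D m u\<close>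
    and D_prob: "\<forall>m<M. \<forall>u<g m. prob_space (D m u)"
    and G_meas: "\<forall>m<M. \<forall>u<g m. (\<lambda>(x, s). G m u x s) \<in> borel_measurable (borel \<Otimes>\<^sub>M D m u)"
    and A3_unbiased: "\<forall>m<M. \<forall>u<g m. \<forall>x.
        integrable (D m u) (G m u x) \<and> (\<integral>s. G m u x s \<partial>D m u) = gF x"
    and A3_var: "\<forall>m<M. \<forall>u<g m. \<forall>x.
        (\<integral>\<^sup>+ s. ennreal ((norm (G m u x s - gF x))\<^sup>2) \<partial>D m u) \<le> ennreal \<zeta>"
    \<comment> \<open>current global model w^t: a random vector on the probability space P of past rounds\<close>
    and P_prob: "prob_space P"
    and wt_meas: "wt \<in> borel_measurable P"
    \<comment> \<open>fusion weights (may depend on the drawn clusters)\<close>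
    and \<omega>_nonneg: "\<forall>Cs\<in>cluster_choices M g c. \<forall>m<M. \<forall>u\<in>Cs m. \<omega> Cs m u \<ge> 0"
    and \<omega>_sum: "\<forall>Cs\<in>cluster_choices M g c. (\<Sum>m<M. \<Sum>u\<in>Cs m. \<omega> Cs m u) = 1"
    \<comment> \<open>learning rate\<close>
    and eta_pos: "\<eta> > 0"
    and eta_le: "\<eta> \<le> min (1 / \<mu>) (min (1 / (real L * \<gamma>)) (\<mu> / \<gamma>\<^sup>2))"
  shows
    "nn_integral
       (P \<Otimes>\<^sub>M (measure_pmf (pmf_of_set (cluster_choices M g c)) \<Otimes>\<^sub>M
            (\<Pi>\<^sub>M i\<in>sample_index M g L. D (fst i) (fst (snd i)))))
       (\<lambda>(x, Cs, S). ennreal ((norm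
          ((\<Sum>m<M. \<Sum>u\<in>Cs m. \<omega> Cs m u *\<^sub>R
              local_sgd (G m u) \<eta> (wt x) (\<lambda>l. S (m, u, l)) L) - wstar))\<^sup>2))
     \<le> ennreal ((1 + real (\<Sum>m<M. g m) * \<eta>\<^sup>2) * (1 - \<mu> * \<eta>) ^ L)
         * (\<integral>\<^sup>+ x. ennreal ((norm (wt x - wstar))\<^sup>2) \<partial>P)
       + ennreal ((1 / real (\<Sum>m<M. g m) + \<eta>\<^sup>2)
           * ((real L)\<^sup>2 * \<zeta> + real (\<Sum>m<M. g m) * (real L)^3 * \<gamma>\<^sup>2 * \<zeta> * \<eta>\<^sup>2 * exp 1))"
  proof -
  define K where "K = (\<Sum>m<M. g m)"
  define CC where "CC = cluster_choices M g c"
  define I where "I = sample_index M g L"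
  define Df where "Df = (\<lambda>i::nat \<times> nat \<times> nat. D (fst i) (fst (snd i)))"
  define p where "p = pmf_of_set CC"
  define Q where "Q = measure_pmf p \<Otimes>\<^sub>M PiM I Df"
  define zp where "zp = max \<zeta> 0"
  define B where "B = (\<lambda>x0::'a. ennreal ((1 - \<mu> * \<eta>) ^ L * (norm (x0 - wstar))\<^sup>2 + real L * (\<eta>\<^sup>2 * zp)))"
  define W where "W = (\<lambda>m u x0 (S::nat \<times> nat \<times> nat \<Rightarrow> 's). local_sgd (G m u) \<eta> x0 (\<lambda>l. S (m, u, l)) L)"
  have gle: "g m \<le> K" if "m < M" for m
    unfolding K_def using that by (intro member_le_sum) auto
  have K1: "K \<ge> 1"
    using gle[of 0] c_bounds M_pos by fastforce
  have finCC: "finite CC"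
  proof -
    have "CC \<subseteq> {f. \<forall>x. (x \<in> {..<M} \<longrightarrow> f x \<in> Pow {..<K}) \<and> (x \<notin> {..<M} \<longrightarrow> f x = {})}"
      unfolding CC_def cluster_choices_def using gle by fastforce
    thus ?thesis by (rule finite_subset) (intro finite_set_of_finite_funs; simp)
  qed
  have CCne: "CC \<noteq> {}"
  proof -
    have "(\<lambda>m. if m < M then {..<c m} else {}) \<in> CC"
      unfolding CC_def cluster_choices_def using c_bounds by auto
    thus ?thesis by auto
  qed
  have setp: "set_pmf p = CC" unfolding p_def using finCC CCne by simp
  have finI: "finite I"
  proof -
    have "I \<subseteq> {..<M} \<times> {..<K} \<times> {..<L}"
      unfolding I_def sample_index_def using gle by fastforce
    thus ?thesis by (rule finite_subset) auto
  qed
  define avg where "avg = (\<lambda>x. (1 / real K) *\<^sub>R (\<Sum>m<M. \<Sum>u<g m. gf m u x))"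
  have gF_eq: "gF x = avg x" for x
  proof -
    have d: "(F has_derivative (\<lambda>h. (1 / real K) * (\<Sum>m<M. \<Sum>u<g m. gf m u x \<bullet> h))) (at x)"
      unfolding F_def K_def[symmetric]
      by (intro has_derivative_mult_right has_derivative_sum) (use A1_grad in auto)
    have "(\<lambda>h. gF x \<bullet> h) = (\<lambda>h. (1 / real K) * (\<Sum>m<M. \<Sum>u<g m. gf m u x \<bullet> h))"
      using has_derivative_unique[OF gF_grad[rule_format] d] .
    hence "gF x \<bullet> h = avg x \<bullet> h" for h
      unfolding avg_def by (simp add: inner_sum_left fun_eq_iff)
    hence "(gF x - avg x) \<bullet> (gF x - avg x) = 0" by (simp add: inner_diff_left)
    thus ?thesis by simp
  qed
  have gF_w: "gF wstar = 0"
  proof -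
    have "(\<lambda>h. gF wstar \<bullet> h) = (\<lambda>h. 0)"
      by (rule has_derivative_local_min[OF gF_grad[rule_format]]) (use wstar_min in auto)
    hence "gF wstar \<bullet> gF wstar = 0" by (simp add: fun_eq_iff)
    thus ?thesis by simp
  qed
  have cnt: "(\<Sum>m<M. \<Sum>u<g m. (a::real)) = real K * a" for a
    unfolding K_def by (simp add: sum_distrib_right)
  have gdiff: "gF x = (1 / real K) *\<^sub>R (\<Sum>m<M. \<Sum>u<g m. gf m u x - gf m u wstar)" for x
  proof -
    have "gF x = gF x - gF wstar" using gF_w by simp
    thus ?thesis unfolding gF_eq avg_def by (simp add: sum_subtractf scaleR_diff_right)
  qed
  have sc: "gF x \<bullet> (x - wstar) \<ge> \<mu> * (norm (x - wstar))\<^sup>2" for x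
  proof -
    have "gF x \<bullet> (x - wstar) = (1 / real K) * (\<Sum>m<M. \<Sum>u<g m. (gf m u x - gf m u wstar) \<bullet> (x - wstar))"
      unfolding gdiff by (simp add: inner_sum_left)
    also have "\<dots> \<ge> (1 / real K) * (\<Sum>m<M. \<Sum>u<g m. \<mu> * (norm (x - wstar))\<^sup>2)"
      using A2 K1 by (intro mult_left_mono sum_mono) auto
    moreover have "(1 / real K) * (\<Sum>m<M. \<Sum>u<g m. \<mu> * (norm (x - wstar))\<^sup>2) = \<mu> * (norm (x - wstar))\<^sup>2"
      unfolding cnt using K1 by simp
    ultimately show ?thesis by simp
  qed
  have lip: "norm (gF x) \<le> \<gamma> * norm (x - wstar)" for x
  proof -
    have "norm (gF x) = (1 / real K) * norm (\<Sum>m<M. \<Sum>u<g m. gf m u x - gf m u wstar)"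
      unfolding gdiff using K1 by simp
    also have "\<dots> \<le> (1 / real K) * (\<Sum>m<M. \<Sum>u<g m. norm (gf m u x - gf m u wstar))"
      using K1 by (intro mult_left_mono order.trans[OF norm_sum sum_mono] norm_sum) auto
    also have "\<dots> \<le> (1 / real K) * (\<Sum>m<M. \<Sum>u<g m. \<gamma> * norm (x - wstar))"
      using A1_smooth K1 by (intro mult_left_mono sum_mono) auto
    also have "\<dots> = \<gamma> * norm (x - wstar)" unfolding cnt using K1 by simp
    finally show ?thesis .
  qed
  have mueta: "\<mu> * \<eta> \<le> 1"
    using eta_le mu_pos by (simp add: field_simps)
  have gam: "\<gamma>\<^sup>2 > 0"
  proof (rule ccontr)
    assume "\<not> \<gamma>\<^sup>2 > 0"
    hence "\<gamma>\<^sup>2 = 0" by (simp add: not_less)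
    thus False using eta_le eta_pos by simp
  qed
  have etag: "\<eta> * \<gamma>\<^sup>2 \<le> \<mu>"
    using eta_le gam by (simp add: field_simps)
  have contr: "(norm (x - \<eta> *\<^sub>R gF x - wstar))\<^sup>2 \<le> (1 - \<mu> * \<eta>) * (norm (x - wstar))\<^sup>2" for x
    by (rule contraction[OF sc lip eta_pos etag])
  have rho0: "0 \<le> 1 - \<mu> * \<eta>" using mueta by simp
  have zp0: "0 \<le> zp" unfolding zp_def by simp
  have Dp: "prob_space (Df i)" if "i \<in> I" for i
    using that D_prob unfolding I_def sample_index_def Df_def by auto
  have psPi: "prob_space (PiM I Df)" by (rule prob_space_PiM) (use Dp in auto)
  have psQ: "prob_space Q" unfolding Q_def
    by (intro prob_space_pair prob_space_measure_pmf psPi)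
  have Ivalid: "(m, u, l) \<in> I" if "m < M" "u < g m" "l < L" for m u l
    using that unfolding I_def sample_index_def by auto
  have Hbound: "(\<integral>\<^sup>+ S. ennreal ((norm (W m u x0 S - wstar))\<^sup>2) \<partial>PiM I Df) \<le> B x0"
    if mu: "m < M" "u < g m" for m u x0
  proof -
    have step: "(\<integral>\<^sup>+ s. ennreal ((norm (x - \<eta> *\<^sub>R G m u x s - wstar))\<^sup>2) \<partial>D m u)
                 \<le> ennreal ((1 - \<mu> * \<eta>) * (norm (x - wstar))\<^sup>2 + \<eta>\<^sup>2 * zp)" for x
      unfolding zp_def
      by (rule sgd_step[OF _ _ _ _ contr]) (use D_prob A3_unbiased A3_var mu in auto)
    have "(\<integral>\<^sup>+ S. ennreal ((norm (local_sgd (G m u) \<eta> x0 (\<lambda>l. S (m, u, l)) L - wstar))\<^sup>2) \<partial>PiM I Df)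
       \<le> ennreal ((1 - \<mu> * \<eta>) ^ L * (norm (x0 - wstar))\<^sup>2 + real L * (\<eta>\<^sup>2 * zp))"
    proof (rule iterate[where Dm = "D m u" and j = "\<lambda>l. (m, u, l)"])
      show "(\<lambda>(x, s). G m u x s) \<in> borel_measurable (borel \<Otimes>\<^sub>M D m u)" using G_meas mu by auto
      show "finite I" by (rule finI)
      show "\<And>l. l < L \<Longrightarrow> (m, u, l) \<in> I" using Ivalid mu by auto
      show "inj (\<lambda>l. (m, u, l))" by (auto intro: injI)
      show "\<And>l. l < L \<Longrightarrow> Df (m, u, l) = D m u" by (simp add: Df_def)
      show "\<And>i. i \<in> I \<Longrightarrow> prob_space (Df i)" by (rule Dp)
      show "\<And>x. (\<integral>\<^sup>+ s. ennreal ((norm (x - \<eta> *\<^sub>R G m u x s - wstar))\<^sup>2) \<partial>D m u)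
                 \<le> ennreal ((1 - \<mu> * \<eta>) * (norm (x - wstar))\<^sup>2 + \<eta>\<^sup>2 * zp)" by (rule step)
      show "0 \<le> 1 - \<mu> * \<eta>" by (rule rho0)
      show "1 - \<mu> * \<eta> \<le> 1" using mu_pos eta_pos by simp
      show "0 \<le> \<eta>\<^sup>2 * zp" using zp0 by simp
      show "L \<le> L" by simp
    qed
    thus ?thesis unfolding W_def B_def .
  qed
  have compm: "(\<lambda>S. S (m, u, l)) \<in> measurable (PiM I Df) (D m u)" if "m < M" "u < g m" "l < L" for m u l
  proof -
    have "(\<lambda>S. S (m, u, l)) \<in> measurable (PiM I Df) (Df (m, u, l))"
      using Ivalid[OF that] by (intro measurable_component_singleton)
    thus ?thesis by (simp add: Df_def)
  qed
  have Wm: "(\<lambda>z. W m u (wt (fst z)) (snd (snd z))) \<in> borel_measurable (P \<Otimes>\<^sub>M Q)"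
    if mu: "m < M" "u < g m" for m u
    unfolding W_def
  proof (rule local_sgd_meas[where Dm = "D m u"])
    show "(\<lambda>(x, s). G m u x s) \<in> borel_measurable (borel \<Otimes>\<^sub>M D m u)" using G_meas mu by auto
    show "(\<lambda>z. wt (fst z)) \<in> borel_measurable (P \<Otimes>\<^sub>M Q)" using wt_meas by measurable
    fix l assume "l < L"
    have ss: "(\<lambda>z. snd (snd z)) \<in> measurable (P \<Otimes>\<^sub>M Q) (PiM I Df)" unfolding Q_def by measurable
    show "(\<lambda>z. snd (snd z) (m, u, l)) \<in> measurable (P \<Otimes>\<^sub>M Q) (D m u)"
      by (rule measurable_compose[OF ss compm[OF mu \<open>l < L\<close>]])
  qed
  have WmPi: "(\<lambda>S. W m u x0 S) \<in> borel_measurable (PiM I Df)"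
    if mu: "m < M" "u < g m" for m u x0
    unfolding W_def
  proof (rule local_sgd_meas[where Dm = "D m u" and wz = "\<lambda>_. x0", simplified])
    show "(\<lambda>(x, s). G m u x s) \<in> borel_measurable (borel \<Otimes>\<^sub>M D m u)" using G_meas mu by auto
    fix l assume "l < L"
    show "(\<lambda>S. S (m, u, l)) \<in> measurable (PiM I Df) (D m u)" by (rule compm[OF mu \<open>l < L\<close>])
  qed
  have CCv: "m < M \<Longrightarrow> u \<in> C m \<Longrightarrow> u < g m" if "C \<in> CC" for C m u
    using that unfolding CC_def cluster_choices_def by auto
  have CCfin: "finite (C m)" if "C \<in> CC" "m < M" for C m
    using that unfolding CC_def cluster_choices_def by (auto intro: finite_subset)
  define \<phi> where "\<phi> = (\<lambda>C x S. ennreal (\<Sum>m<M. \<Sum>u\<in>C m. \<omega> C m u * (norm (W m u (wt x) S - wstar))\<^sup>2))"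
  define \<psi> where "\<psi> = (\<lambda>z. (\<Sum>C\<in>CC. indicator {C} (fst (snd z)) * \<phi> C (fst z) (snd (snd z)))
                           + indicator (- CC) (fst (snd z)) * (\<infinity>::ennreal))"
  have psiC: "\<psi> (x, C, S) = \<phi> C x S" if "C \<in> CC" for x C S
  proof -
    have "(\<Sum>C'\<in>CC. indicator {C'} C * \<phi> C' x S) = (\<Sum>C'\<in>CC. if C' = C then \<phi> C' x S else 0)"
      by (intro sum.cong) (auto simp: indicator_def)
    also have "\<dots> = \<phi> C x S" using that finCC by (simp add: sum.delta')
    finally show ?thesis unfolding \<psi>_def using that by simp
  qed
  have phim: "(\<lambda>z. \<phi> C (fst z) (snd (snd z))) \<in> borel_measurable (P \<Otimes>\<^sub>M Q)" if C: "C \<in> CC" for C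
  proof -
    have "(\<lambda>z. \<Sum>m<M. \<Sum>u\<in>C m. \<omega> C m u * (norm (W m u (wt (fst z)) (snd (snd z)) - wstar))\<^sup>2) \<in> borel_measurable (P \<Otimes>\<^sub>M Q)"
    proof (intro borel_measurable_sum borel_measurable_times borel_measurable_const)
      fix m u assume "m \<in> {..<M}" "u \<in> C m"
      hence mu: "m < M" "u < g m" using CCv[OF C] by auto
      show "(\<lambda>z. (norm (W m u (wt (fst z)) (snd (snd z)) - wstar))\<^sup>2) \<in> borel_measurable (P \<Otimes>\<^sub>M Q)"
        using Wm[OF mu] by measurable
    qed
    thus ?thesis unfolding \<phi>_def by measurable
  qed
  have indm: "(\<lambda>z. indicator A (fst (snd z)) :: ennreal) \<in> borel_measurable (P \<Otimes>\<^sub>M Q)" for A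
  proof -
    have f: "(\<lambda>z. fst (snd z)) \<in> measurable (P \<Otimes>\<^sub>M Q) (measure_pmf p)" unfolding Q_def by measurable
    show ?thesis by (rule measurable_compose[OF f borel_measurable_indicator]) simp
  qed
  have psim: "\<psi> \<in> borel_measurable (P \<Otimes>\<^sub>M Q)"
    unfolding \<psi>_def
    by (intro borel_measurable_add borel_measurable_sum borel_measurable_times_ennreal indm phim borel_measurable_const)
  have pw: "(case z of (x, Cs, S) \<Rightarrow> ennreal ((norm ((\<Sum>m<M. \<Sum>u\<in>Cs m. \<omega> Cs m u *\<^sub>R
              local_sgd (G m u) \<eta> (wt x) (\<lambda>l. S (m, u, l)) L) - wstar))\<^sup>2)) \<le> \<psi> z" for z
  proof -
    obtain x Cs S where z: "z = (x, Cs, S)" by (cases z) auto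
    show ?thesis
    proof (cases "Cs \<in> CC")
      case False
      thus ?thesis unfolding z \<psi>_def by simp
    next
      case True
      have "(norm ((\<Sum>m<M. \<Sum>u\<in>Cs m. \<omega> Cs m u *\<^sub>R W m u (wt x) S) - wstar))\<^sup>2
          \<le> (\<Sum>m<M. \<Sum>u\<in>Cs m. \<omega> Cs m u * (norm (W m u (wt x) S - wstar))\<^sup>2)"
        by (rule jensen2) (use CCfin[OF True] \<omega>_sum \<omega>_nonneg True in \<open>auto simp: CC_def\<close>)
      hence "ennreal ((norm ((\<Sum>m<M. \<Sum>u\<in>Cs m. \<omega> Cs m u *\<^sub>R W m u (wt x) S) - wstar))\<^sup>2) \<le> \<phi> Cs x S"
        unfolding \<phi>_def by (rule ennreal_leI)
      thus ?thesis unfolding z psiC[OF True] by (simp add: W_def)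
    qed
  qed
  interpret Qp: prob_space Q by (rule psQ)
  interpret PIp: prob_space "PiM I Df" by (rule psPi)
  interpret Pp: prob_space P by (rule P_prob)
  have inner: "(\<integral>\<^sup>+ y. \<psi> (x, y) \<partial>Q) \<le> B (wt x)" if x: "x \<in> space P" for x
  proof -
    have m1: "(\<lambda>y. \<psi> (x, y)) \<in> borel_measurable (measure_pmf p \<Otimes>\<^sub>M PiM I Df)"
      using measurable_Pair2[OF psim x] unfolding Q_def .
    have "(\<integral>\<^sup>+ y. \<psi> (x, y) \<partial>Q) = (\<integral>\<^sup>+ Cs. \<integral>\<^sup>+ S. \<psi> (x, Cs, S) \<partial>PiM I Df \<partial>measure_pmf p)"
      unfolding Q_def using PIp.nn_integral_fst[OF m1] by simp
    also have "\<dots> = (\<Sum>C\<in>CC. (\<integral>\<^sup>+ S. \<psi> (x, C, S) \<partial>PiM I Df) * ennreal (pmf p C))"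
      by (subst nn_integral_measure_pmf_finite) (use finCC setp in auto)
    also have "\<dots> \<le> (\<Sum>C\<in>CC. B (wt x) * ennreal (pmf p C))"
    proof (intro sum_mono mult_right_mono)
      fix C assume C: "C \<in> CC"
      have "(\<integral>\<^sup>+ S. \<psi> (x, C, S) \<partial>PiM I Df) = (\<integral>\<^sup>+ S. \<phi> C x S \<partial>PiM I Df)"
        using psiC[OF C] by simp
      also have "\<dots> = (\<integral>\<^sup>+ S. (\<Sum>m<M. \<Sum>u\<in>C m. ennreal (\<omega> C m u) * ennreal ((norm (W m u (wt x) S - wstar))\<^sup>2)) \<partial>PiM I Df)"
      proof (rule nn_integral_cong)
        fix S
        have "(\<Sum>m<M. \<Sum>u\<in>C m. ennreal (\<omega> C m u) * ennreal ((norm (W m u (wt x) S - wstar))\<^sup>2))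
            = (\<Sum>m<M. \<Sum>u\<in>C m. ennreal (\<omega> C m u * (norm (W m u (wt x) S - wstar))\<^sup>2))"
          using \<omega>_nonneg C unfolding CC_def by (intro sum.cong refl) (auto simp: ennreal_mult)
        also have "\<dots> = (\<Sum>m<M. ennreal (\<Sum>u\<in>C m. \<omega> C m u * (norm (W m u (wt x) S - wstar))\<^sup>2))"
          using \<omega>_nonneg C unfolding CC_def by (intro sum.cong refl sum_ennreal) auto
        also have "\<dots> = \<phi> C x S"
          unfolding \<phi>_def using \<omega>_nonneg C unfolding CC_def
          by (intro sum_ennreal sum_nonneg mult_nonneg_nonneg) auto
        finally show "\<phi> C x S = (\<Sum>m<M. \<Sum>u\<in>C m. ennreal (\<omega> C m u) * ennreal ((norm (W m u (wt x) S - wstar))\<^sup>2))" ..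
      qed
      also have "\<dots> = (\<Sum>m<M. \<Sum>u\<in>C m. ennreal (\<omega> C m u) * (\<integral>\<^sup>+ S. ennreal ((norm (W m u (wt x) S - wstar))\<^sup>2) \<partial>PiM I Df))"
      proof -
        have mm: "(\<lambda>S. ennreal ((norm (W m u (wt x) S - wstar))\<^sup>2)) \<in> borel_measurable (PiM I Df)"
          if "m < M" "u \<in> C m" for m u
        proof -
          have "(\<lambda>S. W m u (wt x) S) \<in> borel_measurable (PiM I Df)"
            by (rule WmPi[OF \<open>m < M\<close> CCv[OF C that]])
          thus ?thesis by measurable
        qed
        have mm2: "(\<lambda>S. ennreal (\<omega> C m u) * ennreal ((norm (W m u (wt x) S - wstar))\<^sup>2)) \<in> borel_measurable (PiM I Df)"
          if "m < M" "u \<in> C m" for m u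
          using mm[OF that] by measurable
        have mm3: "(\<lambda>S. \<Sum>u\<in>C m. ennreal (\<omega> C m u) * ennreal ((norm (W m u (wt x) S - wstar))\<^sup>2)) \<in> borel_measurable (PiM I Df)"
          if "m < M" for m
          by (rule borel_measurable_sum) (rule mm2[OF that])
        have "(\<integral>\<^sup>+ S. (\<Sum>m<M. \<Sum>u\<in>C m. ennreal (\<omega> C m u) * ennreal ((norm (W m u (wt x) S - wstar))\<^sup>2)) \<partial>PiM I Df)
            = (\<Sum>m<M. \<integral>\<^sup>+ S. (\<Sum>u\<in>C m. ennreal (\<omega> C m u) * ennreal ((norm (W m u (wt x) S - wstar))\<^sup>2)) \<partial>PiM I Df)"
          by (rule nn_integral_sum) (use mm3 in auto)
        also have "\<dots> = (\<Sum>m<M. \<Sum>u\<in>C m. \<integral>\<^sup>+ S. ennreal (\<omega> C m u) * ennreal ((norm (W m u (wt x) S - wstar))\<^sup>2) \<partial>PiM I Df)"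
          by (intro sum.cong refl nn_integral_sum) (use mm2 in auto)
        also have "\<dots> = (\<Sum>m<M. \<Sum>u\<in>C m. ennreal (\<omega> C m u) * (\<integral>\<^sup>+ S. ennreal ((norm (W m u (wt x) S - wstar))\<^sup>2) \<partial>PiM I Df))"
          by (intro sum.cong refl nn_integral_cmult) (use mm in auto)
        finally show ?thesis .
      qed
      also have "\<dots> \<le> (\<Sum>m<M. \<Sum>u\<in>C m. ennreal (\<omega> C m u) * B (wt x))"
        by (intro sum_mono mult_left_mono Hbound) (use CCv[OF C] in auto)
      also have "\<dots> = ennreal (\<Sum>m<M. \<Sum>u\<in>C m. \<omega> C m u) * B (wt x)"
      proof -
        have "(\<Sum>m<M. \<Sum>u\<in>C m. ennreal (\<omega> C m u)) = ennreal (\<Sum>m<M. \<Sum>u\<in>C m. \<omega> C m u)"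
          using \<omega>_nonneg C unfolding CC_def
          by (intro trans[OF sum.cong[OF refl sum_ennreal] sum_ennreal] sum_nonneg) auto
        moreover have "(\<Sum>m<M. \<Sum>u\<in>C m. ennreal (\<omega> C m u) * B (wt x)) = (\<Sum>m<M. \<Sum>u\<in>C m. ennreal (\<omega> C m u)) * B (wt x)"
          by (simp only: sum_distrib_right)
        ultimately show ?thesis by simp
      qed
      also have "\<dots> = B (wt x)" using \<omega>_sum C unfolding CC_def by simp
      finally show "(\<integral>\<^sup>+ S. \<psi> (x, C, S) \<partial>PiM I Df) \<le> B (wt x)" .
    qed simp
    also have "\<dots> = B (wt x) * (\<Sum>C\<in>CC. ennreal (pmf p C))" by (simp only: sum_distrib_left)
    also have "(\<Sum>C\<in>CC. ennreal (pmf p C)) = 1"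
    proof -
      have "(\<Sum>C\<in>CC. ennreal (pmf p C)) = ennreal (\<Sum>C\<in>CC. pmf p C)" by simp
      also have "(\<Sum>C\<in>CC. pmf p C) = 1"
        unfolding p_def using finCC CCne by (simp add: indicator_def)
      finally show ?thesis by simp
    qed
    finally show ?thesis by simp
  qed
  have "nn_integral (P \<Otimes>\<^sub>M Q) (\<lambda>(x, Cs, S). ennreal ((norm ((\<Sum>m<M. \<Sum>u\<in>Cs m. \<omega> Cs m u *\<^sub>R
              local_sgd (G m u) \<eta> (wt x) (\<lambda>l. S (m, u, l)) L) - wstar))\<^sup>2))
      \<le> nn_integral (P \<Otimes>\<^sub>M Q) \<psi>"
    by (rule nn_integral_mono) (rule pw)
  also have "\<dots> = (\<integral>\<^sup>+ x. \<integral>\<^sup>+ y. \<psi> (x, y) \<partial>Q \<partial>P)"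
    by (rule Qp.nn_integral_fst[OF psim, symmetric])
  also have "\<dots> \<le> (\<integral>\<^sup>+ x. B (wt x) \<partial>P)"
    by (rule nn_integral_mono) (rule inner)
  also have "\<dots> = ennreal ((1 - \<mu> * \<eta>) ^ L) * (\<integral>\<^sup>+ x. ennreal ((norm (wt x - wstar))\<^sup>2) \<partial>P)
                  + ennreal (real L * (\<eta>\<^sup>2 * zp))"
  proof -
    have "(\<integral>\<^sup>+ x. B (wt x) \<partial>P) = (\<integral>\<^sup>+ x. ennreal ((1 - \<mu> * \<eta>) ^ L) * ennreal ((norm (wt x - wstar))\<^sup>2)
                  + ennreal (real L * (\<eta>\<^sup>2 * zp)) \<partial>P)"
      unfolding B_def using rho0 zp0 by (intro nn_integral_cong) (simp add: ennreal_mult ennreal_plus)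
    also have "\<dots> = ennreal ((1 - \<mu> * \<eta>) ^ L) * (\<integral>\<^sup>+ x. ennreal ((norm (wt x - wstar))\<^sup>2) \<partial>P)
                  + ennreal (real L * (\<eta>\<^sup>2 * zp))"
      using wt_meas by (simp add: nn_integral_add nn_integral_cmult Pp.emeasure_space_1)
    finally show ?thesis .
  qed
  also have "\<dots> \<le> ennreal ((1 + real K * \<eta>\<^sup>2) * (1 - \<mu> * \<eta>) ^ L) * (\<integral>\<^sup>+ x. ennreal ((norm (wt x - wstar))\<^sup>2) \<partial>P)
       + ennreal ((1 / real K + \<eta>\<^sup>2)
           * ((real L)\<^sup>2 * \<zeta> + real K * (real L)^3 * \<gamma>\<^sup>2 * \<zeta> * \<eta>\<^sup>2 * exp 1))"
  proof (intro add_mono mult_right_mono)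
    have "0 \<le> (1 - \<mu> * \<eta>) ^ L" using rho0 by simp
    moreover have "1 \<le> 1 + real K * \<eta>\<^sup>2" by simp
    ultimately have "(1 - \<mu> * \<eta>) ^ L \<le> (1 + real K * \<eta>\<^sup>2) * (1 - \<mu> * \<eta>) ^ L"
      by (metis mult_1 mult_right_mono)
    thus "ennreal ((1 - \<mu> * \<eta>) ^ L) \<le> ennreal ((1 + real K * \<eta>\<^sup>2) * (1 - \<mu> * \<eta>) ^ L)"
      by (rule ennreal_leI)
    show "ennreal (real L * (\<eta>\<^sup>2 * zp)) \<le> ennreal ((1 / real K + \<eta>\<^sup>2) * ((real L)\<^sup>2 * \<zeta> + real K * (real L)^3 * \<gamma>\<^sup>2 * \<zeta> * \<eta>\<^sup>2 * exp 1))"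
    proof (cases "\<zeta> \<ge> 0")
      case False
      hence "zp = 0" unfolding zp_def by simp
      thus ?thesis by simp
    next
      case True
      hence zpz: "zp = \<zeta>" unfolding zp_def by simp
      have L1: "real L \<ge> 1" using L_pos by simp
      have a: "real L * (\<eta>\<^sup>2 * \<zeta>) \<le> \<eta>\<^sup>2 * ((real L)\<^sup>2 * \<zeta>)"
      proof -
        have h: "real L * \<zeta> \<le> (real L)\<^sup>2 * \<zeta>" using L1 True by (simp add: power2_eq_square mult_right_mono)
        have "\<eta>\<^sup>2 * (real L * \<zeta>) \<le> \<eta>\<^sup>2 * ((real L)\<^sup>2 * \<zeta>)" by (rule mult_left_mono[OF h]) simp
        thus ?thesis by (metis mult.left_commute)
      qed
      have b: "0 \<le> real K * (real L)^3 * \<gamma>\<^sup>2 * \<zeta> * \<eta>\<^sup>2 * exp 1" using True by simp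
      have c: "\<eta>\<^sup>2 * ((real L)\<^sup>2 * \<zeta>) \<le> (1 / real K + \<eta>\<^sup>2) * ((real L)\<^sup>2 * \<zeta> + real K * (real L)^3 * \<gamma>\<^sup>2 * \<zeta> * \<eta>\<^sup>2 * exp 1)"
        using True b K1 by (intro mult_mono) auto
      show ?thesis using a c zpz by (intro ennreal_leI) simp
    qed
  qed simp
  finally show ?thesis unfolding Q_def p_def CC_def I_def Df_def K_def .
qed
end
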